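(* Let $n\geq 3$, $0\leq k\leq n$, $0<\delta<\frac13$, $r>0$. Let $\mathbf{X}_k$ be a metric space, $\hat q\in\mathbf X_k$, $(M^n,g)$ a Riemannian manifold, $q\in M^n$, and suppose $\Phi:B_{10r}(0,\hat q)\to B_{10r}(q)$ is a pointed $(\delta r)$-Gromov-Hausdorff approximation, where $B_{10r}(0,\hat q)\subset\mathbb{R}^k\times\mathbf{X}_k$. Then for any $\hat q_1^+,\hat q_1^-\in B_r(\hat q)\subset\mathbf{X}_k$ there exists $\hat q_0\in B_{3r}(\hat q)$ such that $$\Big|d(\hat q_0,\hat q_1^+)-\tfrac12 d(\hat q_1^+,\hat q_1^-)\Big|\leq 8\sqrt\delta\, r\quad\text{and}\quad\Big|d(\hat q_0,\hat q_1^-)-\tfrac12 d(\hat q_1^+,\hat q_1^-)\Big|\leq 8\sqrt\delta\, r,$$ and moreover, if $\sqrt\delta\, r\leq\frac{d(\hat q_1^+,\hat q_1^-)}{100}$, then, with $q_1=\Phi(0,\hat q_0)$, $p_{k+1}^+=\Phi(0,\hat q_1^+)$, $p_{k+1}^-=\Phi(0,\hat q_1^-)$, one has $$d(q_1,p_{k+1}^+)+d(q_1,p_{k+1}^-)-d(p_{k+1}^+,p_{k+1}^-)\leq 16\sqrt\delta\, r\quad\text{and}\quad\min\{d(q_1,p_{k+1}^+),d(q_1,p_{k+1}^-)\}\geq\tfrac14 d(\hat q_1^+,\hat q_1^-).$$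
   Context: $B_\rho(x)$ is the open ball. $\mathbb{R}^k\times\mathbf{X}_k$ has the product metric $\sqrt{|a-b|^2+d_{\mathbf X_k}(x,y)^2}$. A pointed $\eta$-Gromov-Hausdorff approximation $f:(\mathbf{X},x_0)\to(\mathbf{Y},y_0)$ satisfies $f(x_0)=y_0$, every point of $\mathbf Y$ lies within $\eta$ of $f(\mathbf X)$, and $|d(f(x_1),f(x_2))-d(x_1,x_2)|<\eta$ for all $x_1,x_2$; base points here are $(0,\hat q)$ and $q$. *)

theory Defs
  imports "HOL-Analysis.Analysis"
begin

text \<open>Euclidean space R^k, realised as functions nat => real vanishing from index k on,
  with the Euclidean distance.\<close>
definition Rk :: "nat \<Rightarrow> (nat \<Rightarrow> real) set" where
  "Rk k = {v. \<forall>i\<ge>k. v i = 0}"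

definition dist_Rk :: "nat \<Rightarrow> (nat \<Rightarrow> real) \<Rightarrow> (nat \<Rightarrow> real) \<Rightarrow> real" where
  "dist_Rk k v w = sqrt (\<Sum>i<k. (v i - w i)\<^sup>2)"

definition dist_prod :: "nat \<Rightarrow> (nat \<Rightarrow> real) \<times> 'x::metric_space \<Rightarrow> (nat \<Rightarrow> real) \<times> 'x \<Rightarrow> real" where
  "dist_prod k p p' = sqrt ((dist_Rk k (fst p) (fst p'))\<^sup>2 + (dist (snd p) (snd p'))\<^sup>2)"

definition prod_ball :: "nat \<Rightarrow> 'x::metric_space \<Rightarrow> real \<Rightarrow> ((nat \<Rightarrow> real) \<times> 'x) set" where
  "prod_ball k x0 \<rho> = {p. fst p \<in> Rk k \<and> dist_prod k p (\<lambda>_. 0, x0) < \<rho>}"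

definition pointed_GH_approx ::
  "'a set \<Rightarrow> ('a \<Rightarrow> 'a \<Rightarrow> real) \<Rightarrow> 'a \<Rightarrow> 'b::metric_space set \<Rightarrow> 'b \<Rightarrow> real \<Rightarrow> ('a \<Rightarrow> 'b) \<Rightarrow> bool" where
  "pointed_GH_approx A dA a0 B b0 \<eta> f \<longleftrightarrow>
     f a0 = b0 \<and> f ` A \<subseteq> B \<and>
     (\<forall>y\<in>B. \<exists>x\<in>A. dist (f x) y < \<eta>) \<and>
     (\<forall>x1\<in>A. \<forall>x2\<in>A. \<bar>dist (f x1) (f x2) - dA x1 x2\<bar> < \<eta>)"

text \<open>Length of a curve gamma : [0,1] -> M, via partition sums; the curve has length
  at most L iff every partition sum is at most L.\<close>
definition partition_sums :: "(real \<Rightarrow> 'm::metric_space) \<Rightarrow> real set" where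
  "partition_sums \<gamma> = {(\<Sum>i<N. dist (\<gamma> (t i)) (\<gamma> (t (Suc i)))) | t N.
      t 0 = 0 \<and> t N = 1 \<and> (\<forall>i<N. t i \<le> t (Suc i))}"

text \<open>Length (intrinsic) metric space: the distance is the infimum of lengths of continuous
  curves joining the points.  (Every curve has length \<ge> distance, so this says that for
  every eps > 0 there is a curve of length \<le> d(x,y) + eps.)\<close>
definition length_space :: "'m::metric_space itself \<Rightarrow> bool" where
  "length_space _ \<longleftrightarrow> (\<forall>x y::'m. \<forall>\<epsilon>>0. \<exists>\<gamma>. continuous_on {0..1} \<gamma> \<and> \<gamma> 0 = x \<and> \<gamma> 1 = y \<and>
       (\<forall>s\<in>partition_sums \<gamma>. s \<le> dist x y + \<epsilon>))"

end

theory Submission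
  imports Defs
begin

lemma dp_zero: "dist_prod k (\<lambda>_. 0, a) (\<lambda>_. 0, b) = dist a b"
  by (simp add: dist_prod_def dist_Rk_def)

lemma dp_ge: "dist (snd p) (snd p') \<le> dist_prod k p p'"
proof -
  have "dist (snd p) (snd p') = sqrt ((dist (snd p) (snd p'))\<^sup>2)" by simp
  also have "\<dots> \<le> dist_prod k p p'" unfolding dist_prod_def
    by (rule real_sqrt_le_mono) simp
  finally show ?thesis .
qed

lemma pb_zero: "(\<lambda>_. 0, a) \<in> prod_ball k qh R \<longleftrightarrow> dist a qh < R"
  by (simp add: prod_ball_def Rk_def dp_zero)

lemma midpt:
  assumes "length_space TYPE('m::metric_space)" "(\<epsilon>::real) > 0"
  shows "\<exists>m. dist (x::'m) m \<le> (dist x y + \<epsilon>)/2 \<and> dist m y \<le> (dist x y + \<epsilon>)/2"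
proof -
  obtain \<gamma> where g: "continuous_on {0..1} \<gamma>" "\<gamma> 0 = x" "\<gamma> 1 = y"
    "\<forall>s\<in>partition_sums \<gamma>. s \<le> dist x y + \<epsilon>"
    using assms unfolding length_space_def by blast
  let ?f = "\<lambda>t. dist x (\<gamma> t) - dist (\<gamma> t) y"
  have c: "continuous_on {0..1} ?f"
    by (intro continuous_intros g(1))
  have "?f 0 \<le> 0" "0 \<le> ?f 1" using g by auto
  then obtain t where t: "0 \<le> t" "t \<le> 1" "?f t = 0"
    using IVT'[of ?f 0 0 1] c by auto
  define tt where "tt = (\<lambda>i::nat. if i = 0 then 0 else if i = 1 then t else (1::real))"
  have "(\<Sum>i<2. dist (\<gamma> (tt i)) (\<gamma> (tt (Suc i)))) \<in> partition_sums \<gamma>"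
    unfolding partition_sums_def
    apply (rule CollectI, rule exI[of _ tt], rule exI[of _ 2])
    using t by (auto simp: tt_def less_2_cases_iff)
  hence "(\<Sum>i<2. dist (\<gamma> (tt i)) (\<gamma> (tt (Suc i)))) \<le> dist x y + \<epsilon>" using g(4) by blast
  hence "dist x (\<gamma> t) + dist (\<gamma> t) y \<le> dist x y + \<epsilon>"
    by (simp add: tt_def numeral_2_eq_2 g(2,3))
  thus ?thesis using t(3) by (intro exI[of _ "\<gamma> t"]) auto
qed

lemma sq_ge: "0 < (\<delta>::real) \<Longrightarrow> \<delta> < 1 \<Longrightarrow> \<delta> \<le> sqrt \<delta>"
proof -
  assume a: "0 < \<delta>" "\<delta> < 1"
  have "sqrt \<delta> \<le> 1" using a by simp
  hence "sqrt \<delta> * sqrt \<delta> \<le> 1 * sqrt \<delta>" using a by (intro mult_right_mono) auto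
  thus ?thesis using a by simp
qed

theorem lemma2p8:
  fixes n k :: nat and \<delta> r :: real
    and qh :: "'x::metric_space" and q :: "'m::metric_space"
    and \<Phi> :: "(nat \<Rightarrow> real) \<times> 'x \<Rightarrow> 'm"
  assumes "n \<ge> 3" and "k \<le> n" and "0 < \<delta>" and "\<delta> < 1/3" and "r > 0"
    and "length_space TYPE('m)"
    and "pointed_GH_approx (prod_ball k qh (10*r)) (dist_prod k) (\<lambda>_. 0, qh) (ball q (10*r)) q (\<delta>*r) \<Phi>"
  shows "\<forall>qp\<in>ball qh r. \<forall>qm\<in>ball qh r. \<exists>q0\<in>ball qh (3*r).
     \<bar>dist q0 qp - dist qp qm / 2\<bar> \<le> 8 * sqrt \<delta> * r \<and>
     \<bar>dist q0 qm - dist qp qm / 2\<bar> \<le> 8 * sqrt \<delta> * r \<and>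
     (sqrt \<delta> * r \<le> dist qp qm / 100 \<longrightarrow>
       (let q1 = \<Phi> (\<lambda>_. 0, q0); pp = \<Phi> (\<lambda>_. 0, qp); pm = \<Phi> (\<lambda>_. 0, qm) in
         dist q1 pp + dist q1 pm - dist pp pm \<le> 16 * sqrt \<delta> * r \<and>
         min (dist q1 pp) (dist q1 pm) \<ge> dist qp qm / 4))"
proof (intro ballI)
  fix qp qm assume qp: "qp \<in> ball qh r" and qm: "qm \<in> ball qh r"
  let ?A = "prod_ball k qh (10*r)"
  have GH: "\<Phi> (\<lambda>_. 0, qh) = q" "\<Phi> ` ?A \<subseteq> ball q (10*r)"
    "\<forall>y\<in>ball q (10*r). \<exists>x\<in>?A. dist (\<Phi> x) y < \<delta>*r"
    "\<forall>x1\<in>?A. \<forall>x2\<in>?A. \<bar>dist (\<Phi> x1) (\<Phi> x2) - dist_prod k x1 x2\<bar> < \<delta>*r"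
    using assms(7) unfolding pointed_GH_approx_def by blast+
  define dh where "dh = dist qp qm"
  define pp where "pp = \<Phi> (\<lambda>_. 0, qp)"
  define pm where "pm = \<Phi> (\<lambda>_. 0, qm)"
  have dqp: "dist qp qh < r" and dqm: "dist qm qh < r" using qp qm by (auto simp: dist_commute)
  have dh2: "dh < 2*r" unfolding dh_def using dist_triangle[of qp qm qh] dqp dqm
    by (simp add: dist_commute)
  have Ap: "(\<lambda>_. 0, qp) \<in> ?A" and Am: "(\<lambda>_. 0, qm) \<in> ?A" and Ah: "(\<lambda>_. 0, qh) \<in> ?A"
    using dqp dqm assms(5) by (auto simp: pb_zero)
  have e1: "\<bar>dist pp pm - dh\<bar> < \<delta>*r" using GH(4) Ap Am unfolding pp_def pm_def dh_def
    by (metis dp_zero)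
  have e2: "\<bar>dist q pp - dist qh qp\<bar> < \<delta>*r" using GH(4) Ap Ah GH(1) unfolding pp_def
    by (metis dp_zero)
  have dr: "\<delta>*r < r/3" using assms by simp
  obtain m where m: "dist pp m \<le> (dist pp pm + \<delta>*r)/2" "dist m pm \<le> (dist pp pm + \<delta>*r)/2"
    using midpt[OF assms(6), of "\<delta>*r" pp pm] assms by auto
  have "dist q m \<le> dist q pp + dist pp m" by (rule dist_triangle)
  hence "m \<in> ball q (10*r)" using m e1 e2 dqp dh2 dr by (simp add: dist_commute)
  then obtain x where x: "x \<in> ?A" "dist (\<Phi> x) m < \<delta>*r" using GH(3) by blast
  obtain a y where xay: "x = (a,y)" by (cases x)
  have "\<bar>dist (\<Phi> x) pp - dist_prod k x (\<lambda>_. 0, qp)\<bar> < \<delta>*r" using GH(4) x(1) Ap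
    unfolding pp_def by blast
  moreover have "dist (\<Phi> x) pp \<le> dist (\<Phi> x) m + dist m pp" by (rule dist_triangle)
  moreover have "dist y qp \<le> dist_prod k x (\<lambda>_. 0, qp)" using dp_ge[of x "(\<lambda>_. 0, qp)" k] xay by simp
  ultimately have yp: "dist y qp < dh/2 + 3*\<delta>*r" using m e1 x(2) by (simp add: dist_commute)
  have "\<bar>dist (\<Phi> x) pm - dist_prod k x (\<lambda>_. 0, qm)\<bar> < \<delta>*r" using GH(4) x(1) Am
    unfolding pm_def by blast
  moreover have "dist (\<Phi> x) pm \<le> dist (\<Phi> x) m + dist m pm" by (rule dist_triangle)
  moreover have "dist y qm \<le> dist_prod k x (\<lambda>_. 0, qm)" using dp_ge[of x "(\<lambda>_. 0, qm)" k] xay by simp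
  ultimately have ym: "dist y qm < dh/2 + 3*\<delta>*r" using m e1 x(2) by (simp add: dist_commute)
  have tri: "dh \<le> dist y qp + dist y qm" unfolding dh_def using dist_triangle[of qp qm y]
    by (simp add: dist_commute)
  have sd: "\<delta> \<le> sqrt \<delta>" using sq_ge assms(3,4) by simp
  have sdr: "\<delta>*r \<le> sqrt \<delta> * r" using sd assms(5) by simp
  have yh: "dist y qh < 3*r" using dist_triangle[of y qh qp] dqp yp dh2 dr
    by (simp add: dist_commute)
  show "\<exists>q0\<in>ball qh (3*r).
     \<bar>dist q0 qp - dist qp qm / 2\<bar> \<le> 8 * sqrt \<delta> * r \<and>
     \<bar>dist q0 qm - dist qp qm / 2\<bar> \<le> 8 * sqrt \<delta> * r \<and>
     (sqrt \<delta> * r \<le> dist qp qm / 100 \<longrightarrow>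
       (let q1 = \<Phi> (\<lambda>_. 0, q0); pp = \<Phi> (\<lambda>_. 0, qp); pm = \<Phi> (\<lambda>_. 0, qm) in
         dist q1 pp + dist q1 pm - dist pp pm \<le> 16 * sqrt \<delta> * r \<and>
         min (dist q1 pp) (dist q1 pm) \<ge> dist qp qm / 4))"
  proof (rule bexI[of _ y])
    show "y \<in> ball qh (3*r)" using yh by (simp add: dist_commute)
    hence Ay: "(\<lambda>_. 0, y) \<in> ?A" using assms(5) by (simp add: pb_zero dist_commute)
    define q1 where "q1 = \<Phi> (\<lambda>_. 0, y)"
    have f1: "\<bar>dist q1 pp - dist y qp\<bar> < \<delta>*r" using GH(4) Ay Ap unfolding q1_def pp_def
      by (metis dp_zero)
    have f2: "\<bar>dist q1 pm - dist y qm\<bar> < \<delta>*r" using GH(4) Ay Am unfolding q1_def pm_def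
      by (metis dp_zero)
    have "sqrt \<delta> * r \<le> dh / 100 \<longrightarrow>
         dist q1 pp + dist q1 pm - dist pp pm \<le> 16 * sqrt \<delta> * r \<and>
         min (dist q1 pp) (dist q1 pm) \<ge> dh / 4"
      using f1 f2 yp ym tri e1 sdr unfolding abs_less_iff by (auto simp: min_def)
    moreover have "\<bar>dist y qp - dh / 2\<bar> \<le> 8 * sqrt \<delta> * r"
      "\<bar>dist y qm - dh / 2\<bar> \<le> 8 * sqrt \<delta> * r"
      using yp ym tri sdr unfolding abs_le_iff by auto
    ultimately show "\<bar>dist y qp - dist qp qm / 2\<bar> \<le> 8 * sqrt \<delta> * r \<and>
     \<bar>dist y qm - dist qp qm / 2\<bar> \<le> 8 * sqrt \<delta> * r \<and>
     (sqrt \<delta> * r \<le> dist qp qm / 100 \<longrightarrow>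
       (let q1 = \<Phi> (\<lambda>_. 0, y); pp = \<Phi> (\<lambda>_. 0, qp); pm = \<Phi> (\<lambda>_. 0, qm) in
         dist q1 pp + dist q1 pm - dist pp pm \<le> 16 * sqrt \<delta> * r \<and>
         min (dist q1 pp) (dist q1 pm) \<ge> dist qp qm / 4))"
      unfolding Let_def q1_def pp_def pm_def dh_def by simp
  qed
qed

end
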